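(* Let $\mathcal{F}\subseteq\mathcal{P}(\omega)$ be a free filter and let $\mathcal{F}^{(\omega)}$ be the set of all subsets of $\omega\times\omega$ of the form $\bigcup\{\{n\}\times A_n:n<\omega\}$ with $A_n\in\mathcal{F}$ for all $n$. Then (a) $\mathcal{F}$ is non-meager if and only if $\mathcal{F}^{(\omega)}$ is non-meager; and (b) $\mathcal{F}$ is a $P$-filter if and only if $\mathcal{F}^{(\omega)}$ is a $P$-filter.
   Context: A filter on a countable set $S$ is free if it contains all cofinite subsets of $S$. Subsets of $\omega$ (resp. $\omega\times\omega$) are identified with their characteristic functions, so $\mathcal{P}(\omega)$ and $\mathcal{P}(\omega\times\omega)$ carry the Cantor set topology; a filter is non-meager if it is not meager as a subspace of this Cantor set. A filter $\mathcal{G}$ is a $P$-filter if for every countable $\{G_n:n<\omega\}\subseteq\mathcal{G}$ there is $G\in\mathcal{G}$ with $G\setminus G_n$ finite for every $n$. ($\mathcal{F}^{(\omega)}$ is a filter on $\omega\times\omega$.) *)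

theory Defs
  imports "HOL-Analysis.Analysis"
begin

definition is_filter :: "'a set set \<Rightarrow> bool" where
  "is_filter F \<longleftrightarrow> UNIV \<in> F \<and> {} \<notin> F \<and>
     (\<forall>A B. A \<in> F \<and> A \<subseteq> B \<longrightarrow> B \<in> F) \<and>
     (\<forall>A B. A \<in> F \<and> B \<in> F \<longrightarrow> A \<inter> B \<in> F)"

definition free_filter :: "'a set set \<Rightarrow> bool" where
  "free_filter F \<longleftrightarrow> is_filter F \<and> (\<forall>A. finite (UNIV - A) \<longrightarrow> A \<in> F)"

definition P_filter :: "'a set set \<Rightarrow> bool" where
  "P_filter F \<longleftrightarrow> is_filter F \<and>
     (\<forall>G :: nat \<Rightarrow> 'a set. range G \<subseteq> F \<longrightarrow> (\<exists>H\<in>F. \<forall>n. finite (H - G n)))"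

definition cantor_top :: "('a \<Rightarrow> bool) topology" where
  "cantor_top = product_topology (\<lambda>_. discrete_topology UNIV) UNIV"

definition char_fun :: "'a set \<Rightarrow> ('a \<Rightarrow> bool)" where
  "char_fun A = (\<lambda>x. x \<in> A)"

definition nowhere_dense_in :: "'b topology \<Rightarrow> 'b set \<Rightarrow> bool" where
  "nowhere_dense_in X A \<longleftrightarrow> X interior_of (X closure_of A) = {}"

definition meager_in :: "'b topology \<Rightarrow> 'b set \<Rightarrow> bool" where
  "meager_in X A \<longleftrightarrow> (\<exists>N :: nat \<Rightarrow> 'b set. (\<forall>n. nowhere_dense_in X (N n)) \<and> A \<subseteq> (\<Union>n. N n))"

definition non_meager :: "'a set set \<Rightarrow> bool" where
  "non_meager F \<longleftrightarrow> \<not> meager_in cantor_top (char_fun ` F)"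

definition omega_power :: "nat set set \<Rightarrow> (nat \<times> nat) set set" where
  "omega_power F = {Sigma UNIV A | A. \<forall>n. A n \<in> F}"

end

theory Submission
  imports Defs
begin

definition agr :: "'a set \<Rightarrow> ('a \<Rightarrow> bool) \<Rightarrow> ('a \<Rightarrow> bool) \<Rightarrow> bool" where
  "agr E w f \<longleftrightarrow> (\<forall>x\<in>E. f x = w x)"

lemma topspace_cantor [simp]: "topspace cantor_top = UNIV"
  by (simp add: cantor_top_def)

lemma open_B:
  assumes "finite E"
  shows "openin cantor_top {f. agr E w f}"
proof -
  have eq: "{f. agr E w f} = PiE UNIV (\<lambda>x. if x\<in>E then {w x} else UNIV)"
    by (auto simp: agr_def PiE_def extensional_def Pi_def)
  have "finite {i. (if i\<in>E then {w i} else UNIV) \<noteq> topspace (discrete_topology UNIV)}"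
    by (rule finite_subset[OF _ assms]) auto
  then show ?thesis unfolding eq cantor_top_def
    by (intro product_topology_basis) auto
qed

lemma nbhd_B:
  assumes "openin cantor_top T" "f \<in> T"
  shows "\<exists>E. finite E \<and> {g. agr E f g} \<subseteq> T"
proof -
  obtain U where U: "finite {i. U i \<noteq> topspace (discrete_topology (UNIV::bool set))}"
    "f \<in> PiE UNIV U" "PiE UNIV U \<subseteq> T"
    using assms unfolding cantor_top_def openin_product_topology_alt by fastforce
  let ?E = "{i. U i \<noteq> UNIV}"
  have "{g. agr ?E f g} \<subseteq> PiE UNIV U"
  proof
    fix g assume "g \<in> {g. agr ?E f g}"
    have "g i \<in> U i" for i
    proof (cases "U i = UNIV")
      case False
      then have "g i = f i" using \<open>g \<in> {g. agr ?E f g}\<close> by (simp add: agr_def)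
      moreover have "f i \<in> U i" using U(2) by (auto simp: PiE_def Pi_def)
      ultimately show ?thesis by simp
    qed simp
    then have "\<forall>i. g i \<in> U i" by blast
    then show "g \<in> PiE UNIV U" by (auto simp: PiE_def Pi_def extensional_def)
  qed
  moreover have "finite ?E" using U(1) by simp
  ultimately show ?thesis using U(3) by (meson order_trans)
qed

lemma nd_iff:
  fixes N :: "('a \<Rightarrow> bool) set"
  shows "nowhere_dense_in cantor_top N \<longleftrightarrow>
   (\<forall>E w. finite E \<longrightarrow> (\<exists>E' w'. finite E' \<and> E \<subseteq> E' \<and> agr E w w' \<and>
        (\<forall>f. agr E' w' f \<longrightarrow> f \<notin> N)))"
proof
  assume nd: "nowhere_dense_in cantor_top N"
  show "\<forall>E w. finite E \<longrightarrow> (\<exists>E' w'. finite E' \<and> E \<subseteq> E' \<and> agr E w w' \<and>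
        (\<forall>f. agr E' w' f \<longrightarrow> f \<notin> N))"
  proof (intro allI impI)
    fix E :: "'a set" and w :: "'a \<Rightarrow> bool" assume fE: "finite E"
    have op: "openin cantor_top {f. agr E w f}" using open_B[OF fE] .
    have "w \<in> {f. agr E w f}" by (simp add: agr_def)
    then have "\<not> {f. agr E w f} \<subseteq> cantor_top closure_of N"
    proof (intro notI)
      assume "w \<in> {f. agr E w f}" "{f. agr E w f} \<subseteq> cantor_top closure_of N"
      then have "w \<in> cantor_top interior_of cantor_top closure_of N"
        unfolding interior_of_def using op by blast
      then show False using nd unfolding nowhere_dense_in_def by simp
    qed
    then obtain f where f: "agr E w f" "f \<notin> cantor_top closure_of N" by blast
    then obtain T where T: "f \<in> T" "openin cantor_top T" "\<forall>y\<in>N. y \<notin> T"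
      unfolding in_closure_of by force
    obtain E2 where E2: "finite E2" "{g. agr E2 f g} \<subseteq> T" using nbhd_B[OF T(2,1)] by blast
    show "\<exists>E' w'. finite E' \<and> E \<subseteq> E' \<and> agr E w w' \<and> (\<forall>f. agr E' w' f \<longrightarrow> f \<notin> N)"
    proof (intro exI conjI allI impI)
      show "finite (E \<union> E2)" using fE E2(1) by simp
      show "E \<subseteq> E \<union> E2" by simp
      show "agr E w f" using f(1) .
      fix g assume "agr (E \<union> E2) f g"
      then have "agr E2 f g" by (simp add: agr_def)
      then have "g \<in> T" using E2(2) by blast
      then show "g \<notin> N" using T(3) by blast
    qed
  qed
next
  assume R: "\<forall>E w. finite E \<longrightarrow> (\<exists>E' w'. finite E' \<and> E \<subseteq> E' \<and> agr E w w' \<and>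
        (\<forall>f. agr E' w' f \<longrightarrow> f \<notin> N))"
  show "nowhere_dense_in cantor_top N"
    unfolding nowhere_dense_in_def
  proof (rule ccontr)
    assume "cantor_top interior_of cantor_top closure_of N \<noteq> {}"
    then obtain f T where T: "openin cantor_top T" "f \<in> T" "T \<subseteq> cantor_top closure_of N"
      unfolding interior_of_def by blast
    obtain E where E: "finite E" "{g. agr E f g} \<subseteq> T" using nbhd_B[OF T(1,2)] by blast
    have "\<exists>E' w'. finite E' \<and> E \<subseteq> E' \<and> agr E f w' \<and> (\<forall>g. agr E' w' g \<longrightarrow> g \<notin> N)"
      using R E(1) by (elim allE[of _ E] allE[of _ f]) simp
    then obtain E' w' where W: "finite E'" "E \<subseteq> E'" "agr E f w'" "\<forall>g. agr E' w' g \<longrightarrow> g \<notin> N"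
      by (elim exE conjE)
    have "w' \<in> {g. agr E f g}" using W(3) by simp
    then have "w' \<in> cantor_top closure_of N" using E(2) T(3) by blast
    then have cl: "\<And>T. w' \<in> T \<Longrightarrow> openin cantor_top T \<Longrightarrow> (\<exists>y. y \<in> N \<and> y \<in> T)"
      by (simp add: in_closure_of)
    have "w' \<in> {g. agr E' w' g}" by (simp add: agr_def)
    then obtain y where "y \<in> N" "y \<in> {g. agr E' w' g}" using cl[OF _ open_B[OF W(1)]] by blast
    then show False using W(4) by blast
  qed
qed
lemma nd_D:
  fixes N :: "('a \<Rightarrow> bool) set"
  assumes "nowhere_dense_in cantor_top N" "finite E"
  shows "\<exists>E' w'. finite E' \<and> E \<subseteq> E' \<and> agr E w w' \<and> (\<forall>f. agr E' w' f \<longrightarrow> f \<notin> N)"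
proof -
  have "\<forall>E w. finite E \<longrightarrow> (\<exists>E' w'. finite E' \<and> E \<subseteq> E' \<and> agr E w w' \<and>
        (\<forall>f. agr E' w' f \<longrightarrow> f \<notin> N))" using assms(1) by (simp only: nd_iff)
  then have "finite E \<longrightarrow> (\<exists>E' w'. finite E' \<and> E \<subseteq> E' \<and> agr E w w' \<and>
        (\<forall>f. agr E' w' f \<longrightarrow> f \<notin> N))" by (elim allE[of _ E] allE[of _ w])
  then show ?thesis using assms(2) by (rule mp)
qed

lemma nd_empty: "nowhere_dense_in cantor_top {}"
  unfolding nd_iff by (auto simp: agr_def)

lemma nd_Un:
  fixes A B :: "('a \<Rightarrow> bool) set"
  assumes "nowhere_dense_in cantor_top A" "nowhere_dense_in cantor_top B"
  shows "nowhere_dense_in cantor_top (A \<union> B)"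
  unfolding nd_iff
proof (intro allI impI)
  fix E :: "'a set" and w assume "finite E"
  obtain E1 w1 where 1: "finite E1" "E \<subseteq> E1" "agr E w w1" "\<forall>f. agr E1 w1 f \<longrightarrow> f \<notin> A"
    using nd_D[OF assms(1) \<open>finite E\<close>, of w] by (elim exE conjE)
  obtain E2 w2 where 2: "finite E2" "E1 \<subseteq> E2" "agr E1 w1 w2" "\<forall>f. agr E2 w2 f \<longrightarrow> f \<notin> B"
    using nd_D[OF assms(2) 1(1), of w1] by (elim exE conjE)
  show "\<exists>E' w'. finite E' \<and> E \<subseteq> E' \<and> agr E w w' \<and> (\<forall>f. agr E' w' f \<longrightarrow> f \<notin> A \<union> B)"
  proof (intro exI conjI allI impI)
    show "finite E2" "E \<subseteq> E2" using 1 2 by auto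
    show "agr E w w2" using 1(2,3) 2(3) unfolding agr_def by (simp add: subset_iff)
    fix f assume f: "agr E2 w2 f"
    then have "agr E1 w1 f" using 2(2,3) unfolding agr_def by (simp add: subset_iff)
    then show "f \<notin> A \<union> B" using f 1(4) 2(4) by blast
  qed
qed

lemma nd_UN_atMost:
  fixes N :: "nat \<Rightarrow> ('a \<Rightarrow> bool) set"
  assumes "\<And>n. nowhere_dense_in cantor_top (N n)"
  shows "nowhere_dense_in cantor_top (\<Union>i\<le>k. N i)"
proof (induction k)
  case 0 then show ?case using assms by simp
next
  case (Suc k)
  have "(\<Union>i\<le>Suc k. N i) = N (Suc k) \<union> (\<Union>i\<le>k. N i)" by (auto simp: atMost_Suc)
  then show ?case using nd_Un[OF assms Suc.IH] by simp
qed

lemma ext_lemma: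
  fixes N :: "('a \<Rightarrow> bool) set"
  assumes nd: "nowhere_dense_in cantor_top N" and fD: "finite D"
  shows "\<exists>I u. finite I \<and> I \<inter> D = {} \<and> (\<forall>f. agr I u f \<longrightarrow> f \<notin> N)"
proof -
  have main: "finite Q \<Longrightarrow> Q \<subseteq> Pow D \<Longrightarrow> \<exists>I u. finite I \<and> I \<inter> D = {} \<and>
     (\<forall>T\<in>Q. \<forall>f. agr D (\<lambda>x. x \<in> T) f \<and> agr I u f \<longrightarrow> f \<notin> N)" for Q
  proof (induction Q rule: finite_induct)
    case empty
    show ?case by (rule exI[of _ "{}"]) auto
  next
    case (insert T Q)
    then obtain I u where IU: "finite I" "I \<inter> D = {}"
      "\<forall>T\<in>Q. \<forall>f. agr D (\<lambda>x. x \<in> T) f \<and> agr I u f \<longrightarrow> f \<notin> N" by auto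
    define w where "w = (\<lambda>x. if x \<in> D then x \<in> T else u x)"
    have "finite (D \<union> I)" using fD IU(1) by simp
    then obtain E' w' where W: "finite E'" "D \<union> I \<subseteq> E'" "agr (D \<union> I) w w'"
        "\<forall>f. agr E' w' f \<longrightarrow> f \<notin> N"
      using nd_D[OF nd, of "D \<union> I" w] by blast
    show ?case
    proof (intro exI conjI)
      show "finite (E' - D)" using W(1) by simp
      show "(E' - D) \<inter> D = {}" by auto
      show "\<forall>T'\<in>insert T Q. \<forall>f. agr D (\<lambda>x. x \<in> T') f \<and> agr (E' - D) w' f \<longrightarrow> f \<notin> N"
      proof (intro ballI allI impI)
        fix T' f assume T': "T' \<in> insert T Q" and af: "agr D (\<lambda>x. x \<in> T') f \<and> agr (E' - D) w' f"
        show "f \<notin> N"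
        proof (cases "T' = T")
          case True
          have "agr E' w' f"
            unfolding agr_def
          proof
            fix x assume x: "x \<in> E'"
            show "f x = w' x"
            proof (cases "x \<in> D")
              case True
              then have "w' x = w x" using W(3) by (auto simp: agr_def)
              then show ?thesis using True af \<open>T' = T\<close> by (auto simp: agr_def w_def)
            next
              case False
              then show ?thesis using af x by (auto simp: agr_def)
            qed
          qed
          then show ?thesis using W(4) by blast
        next
          case False
          then have "T' \<in> Q" using T' by auto
          moreover have "agr I u f"
            unfolding agr_def
          proof
            fix x assume x: "x \<in> I"
            then have "x \<notin> D" using IU(2) by auto
            then have "f x = w' x" using af x W(2) by (auto simp: agr_def)
            also have "w' x = w x" using W(3) x by (auto simp: agr_def)
            finally show "f x = u x" using \<open>x \<notin> D\<close> by (simp add: w_def)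
          qed
          ultimately show ?thesis using IU(3) af by blast
        qed
      qed
    qed
  qed
  obtain I u where IU: "finite I" "I \<inter> D = {}"
     "\<forall>T\<in>Pow D. \<forall>f. agr D (\<lambda>x. x \<in> T) f \<and> agr I u f \<longrightarrow> f \<notin> N"
    using main[of "Pow D"] fD by auto
  show ?thesis
  proof (intro exI conjI allI impI)
    fix f assume "agr I u f"
    moreover have "agr D (\<lambda>x. x \<in> {x\<in>D. f x}) f" by (auto simp: agr_def)
    ultimately show "f \<notin> N" using IU(3)[rule_format, of "{x\<in>D. f x}" f] by auto
  qed (use IU in auto)
qed
lemma op_mem: "X \<in> omega_power F \<longleftrightarrow> (\<forall>n. {m. (n,m) \<in> X} \<in> F)"
proof
  assume "X \<in> omega_power F"
  then obtain A where "X = Sigma UNIV A" "\<forall>n. A n \<in> F" unfolding omega_power_def by blast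
  then show "\<forall>n. {m. (n,m) \<in> X} \<in> F" by simp
next
  assume "\<forall>n. {m. (n,m) \<in> X} \<in> F"
  moreover have "X = Sigma UNIV (\<lambda>n. {m. (n,m) \<in> X})" by auto
  ultimately show "X \<in> omega_power F" unfolding omega_power_def by blast
qed

lemma is_filter_op:
  assumes "is_filter F" shows "is_filter (omega_power F)"
proof -
  have F1: "UNIV \<in> F" using assms unfolding Defs.is_filter_def by simp
  have F2: "{} \<notin> F" using assms unfolding Defs.is_filter_def by simp
  have F3: "\<And>A B. A \<in> F \<Longrightarrow> A \<subseteq> B \<Longrightarrow> B \<in> F" using assms unfolding Defs.is_filter_def by blast
  have F4: "\<And>A B. A \<in> F \<Longrightarrow> B \<in> F \<Longrightarrow> A \<inter> B \<in> F" using assms unfolding Defs.is_filter_def by blast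
  note F = F1 F2 F3 F4
  have 1: "UNIV \<in> omega_power F" unfolding op_mem using F(1) by simp
  have 2: "{} \<notin> omega_power F"
  proof
    assume "{} \<in> omega_power F"
    then have "{m. (0::nat, m) \<in> ({}::(nat\<times>nat) set)} \<in> F" unfolding op_mem by blast
    moreover have "{m. (0::nat, m) \<in> ({}::(nat\<times>nat) set)} = {}" by blast
    ultimately show False using F2 by metis
  qed
  have 3: "B \<in> omega_power F" if "A \<in> omega_power F" "A \<subseteq> B" for A B
  proof -
    have "{m. (n, m) \<in> B} \<in> F" for n
    proof -
      have "{m. (n, m) \<in> A} \<in> F" using that(1) unfolding op_mem by (elim allE[of _ n])
      moreover have "{m. (n, m) \<in> A} \<subseteq> {m. (n, m) \<in> B}" using that(2) by blast
      ultimately show ?thesis by (rule F3)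
    qed
    then show ?thesis unfolding op_mem by (rule allI)
  qed
  have 4: "A \<inter> B \<in> omega_power F" if "A \<in> omega_power F" "B \<in> omega_power F" for A B
  proof -
    have "{m. (n, m) \<in> A \<inter> B} \<in> F" for n
    proof -
      have "{m. (n, m) \<in> A} \<in> F" using that(1) unfolding op_mem by (elim allE[of _ n])
      moreover have "{m. (n, m) \<in> B} \<in> F" using that(2) unfolding op_mem by (elim allE[of _ n])
      ultimately have "{m. (n, m) \<in> A} \<inter> {m. (n, m) \<in> B} \<in> F" by (rule F4)
      moreover have "{m. (n, m) \<in> A} \<inter> {m. (n, m) \<in> B} = {m. (n, m) \<in> A \<inter> B}" by auto
      ultimately show ?thesis by simp
    qed
    then show ?thesis unfolding op_mem by (rule allI)
  qed
  show ?thesis unfolding Defs.is_filter_def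
  proof (intro conjI allI impI)
    fix A B assume "A \<in> omega_power F \<and> A \<subseteq> B" then show "B \<in> omega_power F" using 3 by blast
  next
    fix A B assume "A \<in> omega_power F \<and> B \<in> omega_power F" then show "A \<inter> B \<in> omega_power F" using 4 by blast
  qed (use 1 2 in auto)
qed

lemma filter_inter_atMost:
  assumes "is_filter F" "\<And>k. R k \<in> F"
  shows "(\<Inter>k\<le>(n::nat). R k) \<in> F"
proof (induction n)
  case 0 then show ?case using assms by simp
next
  case (Suc n)
  have "(\<Inter>k\<le>Suc n. R k) = R (Suc n) \<inter> (\<Inter>k\<le>n. R k)" by (auto simp: atMost_Suc)
  moreover have "R (Suc n) \<inter> (\<Inter>k\<le>n. R k) \<in> F"
    using assms(1) assms(2)[of "Suc n"] Suc.IH unfolding Defs.is_filter_def by blast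
  ultimately show ?case by simp
qed

lemma P_up:
  assumes F: "is_filter F" and P: "P_filter F"
  shows "P_filter (omega_power F)"
  unfolding P_filter_def
proof (intro conjI allI impI)
  show "is_filter (omega_power F)" using is_filter_op[OF F] .
  fix G :: "nat \<Rightarrow> (nat \<times> nat) set" assume G: "range G \<subseteq> omega_power F"
  define R where "R k n = {m. (n,m) \<in> G k}" for k n
  have R: "R k n \<in> F" for k n
  proof -
    have "G k \<in> omega_power F" using G by auto
    then show ?thesis unfolding R_def op_mem by blast
  qed
  have Pc: "\<forall>G :: nat \<Rightarrow> nat set. range G \<subseteq> F \<longrightarrow> (\<exists>H\<in>F. \<forall>n. finite (H - G n))"
    using P unfolding P_filter_def by (elim conjE)
  have ex: "\<exists>B. B \<in> F \<and> (\<forall>k. finite (B - R k n))" for n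
  proof -
    have "range (\<lambda>k. R k n) \<subseteq> F" using R by auto
    then have "\<exists>H\<in>F. \<forall>k. finite (H - R k n)" using Pc by (elim allE[of _ "\<lambda>k. R k n"] impE)
    then show ?thesis by (elim bexE) (intro exI conjI)
  qed
  have "\<forall>n. \<exists>B. B \<in> F \<and> (\<forall>k. finite (B - R k n))" using ex by (rule allI)
  from choice[OF this] obtain B where B0: "\<forall>n. B n \<in> F \<and> (\<forall>k. finite (B n - R k n))"
    by (elim exE)
  have B: "\<And>n. B n \<in> F" "\<And>n k. finite (B n - R k n)" using B0 by auto
  define H' where "H' n = B n \<inter> (\<Inter>k\<le>n. R k n)" for n
  have H': "H' n \<in> F" for n
  proof -
    have "(\<Inter>k\<le>n. R k n) \<in> F" using filter_inter_atMost[OF F, of "\<lambda>k. R k n" n] R by blast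
    then show ?thesis using F B(1)[of n] unfolding H'_def Defs.is_filter_def by blast
  qed
  define H where "H = Sigma UNIV H'"
  show "\<exists>H\<in>omega_power F. \<forall>n. finite (H - G n)"
  proof (intro bexI allI)
    show "H \<in> omega_power F" unfolding H_def op_mem using H' by simp
    fix k
    have "H - G k \<subseteq> (\<Union>n<k. {n} \<times> (B n - R k n))"
    proof
      fix x assume x: "x \<in> H - G k"
      obtain n m where nm: "x = (n,m)" by force
      have "n < k"
      proof (rule ccontr)
        assume "\<not> n < k"
        then have "m \<in> R k n" using x nm unfolding H_def H'_def by auto
        then show False using x nm unfolding R_def by auto
      qed
      then show "x \<in> (\<Union>n<k. {n} \<times> (B n - R k n))"
        using x nm unfolding H_def H'_def R_def by auto
    qed
    moreover have "finite (\<Union>n<k. {n} \<times> (B n - R k n))" using B(2) by auto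
    ultimately show "finite (H - G k)" by (rule finite_subset)
  qed
qed

lemma P_down:
  assumes F: "is_filter F" and P: "P_filter (omega_power F)"
  shows "P_filter F"
  unfolding P_filter_def
proof (intro conjI allI impI)
  show "is_filter F" using F .
  fix G :: "nat \<Rightarrow> nat set" assume G: "range G \<subseteq> F"
  have "UNIV \<times> G k \<in> omega_power F" for k
  proof -
    have "G k \<in> F" using G by auto
    then show ?thesis unfolding op_mem by simp
  qed
  then have "range (\<lambda>k. UNIV \<times> G k) \<subseteq> omega_power F" by auto
  moreover have "\<forall>G :: nat \<Rightarrow> (nat\<times>nat) set. range G \<subseteq> omega_power F \<longrightarrow>
     (\<exists>H\<in>omega_power F. \<forall>n. finite (H - G n))"
    using P unfolding P_filter_def by (elim conjE)
  ultimately have "\<exists>H\<in>omega_power F. \<forall>k. finite (H - UNIV \<times> G k)"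
    by (elim allE[of _ "\<lambda>k. UNIV \<times> G k"] impE)
  then obtain H where H: "H \<in> omega_power F" "\<And>k. finite (H - UNIV \<times> G k)"
    by blast
  show "\<exists>H\<in>F. \<forall>n. finite (H - G n)"
  proof (intro bexI allI)
    show "{m. (0,m) \<in> H} \<in> F" using H(1) unfolding op_mem by blast
    fix k
    have "{m. (0,m) \<in> H} - G k \<subseteq> snd ` (H - UNIV \<times> G k)" by force
    then show "finite ({m. (0,m) \<in> H} - G k)" using H(2) finite_subset by blast
  qed
qed

lemma meager_up:
  assumes "\<not> non_meager F"
  shows "\<not> non_meager (omega_power F)"
proof -
  obtain N :: "nat \<Rightarrow> (nat \<Rightarrow> bool) set" where N: "\<And>n. nowhere_dense_in cantor_top (N n)"
    "char_fun ` F \<subseteq> (\<Union>n. N n)"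
    using assms unfolding non_meager_def meager_in_def by blast
  define N' where "N' n = {g :: nat \<times> nat \<Rightarrow> bool. (\<lambda>m. g (0,m)) \<in> N n}" for n
  have "nowhere_dense_in cantor_top (N' n)" for n
    unfolding nd_iff
  proof (intro allI impI)
    fix E :: "(nat \<times> nat) set" and w :: "nat \<times> nat \<Rightarrow> bool" assume fE: "finite E"
    define E0 where "E0 = {m. (0,m) \<in> E}"
    have "E0 \<subseteq> snd ` E" unfolding E0_def by (auto intro: rev_image_eqI)
    then have "finite E0" using fE finite_subset by blast
    then obtain E0' w0' where W: "finite E0'" "E0 \<subseteq> E0'" "agr E0 (\<lambda>m. w (0,m)) w0'"
      "\<forall>f. agr E0' w0' f \<longrightarrow> f \<notin> N n"
      using nd_D[OF N(1)[of n], of E0 "\<lambda>m. w (0,m)"] by blast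
    define w' where "w' = (\<lambda>(a::nat,b). if a = 0 then w0' b else w (a,b))"
    show "\<exists>E' w'. finite E' \<and> E \<subseteq> E' \<and> agr E w w' \<and> (\<forall>f. agr E' w' f \<longrightarrow> f \<notin> N' n)"
    proof (intro exI conjI allI impI)
      show "finite (E \<union> {0} \<times> E0')" using fE W(1) by simp
      show "E \<subseteq> E \<union> {0} \<times> E0'" by simp
      show "agr E w w'" unfolding agr_def
      proof
        fix x assume x: "x \<in> E"
        obtain a b where ab: "x = (a,b)" by force
        show "w' x = w x"
        proof (cases "a = 0")
          case True
          then have "b \<in> E0" using x ab unfolding E0_def by simp
          then show ?thesis using W(3) True ab unfolding agr_def w'_def by simp
        qed (simp add: ab w'_def)
      qed
      fix f assume af: "agr (E \<union> {0} \<times> E0') w' f"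
      have "agr E0' w0' (\<lambda>m. f (0,m))" unfolding agr_def
      proof
        fix m assume "m \<in> E0'"
        then have "f (0,m) = w' (0,m)" using af unfolding agr_def by blast
        then show "f (0,m) = w0' m" by (simp add: w'_def)
      qed
      then show "f \<notin> N' n" using W(4) unfolding N'_def by auto
    qed
  qed
  moreover have "char_fun ` omega_power F \<subseteq> (\<Union>n. N' n)"
  proof
    fix g assume "g \<in> char_fun ` omega_power F"
    then obtain X where X: "X \<in> omega_power F" "g = char_fun X" by blast
    then have "{m. (0,m) \<in> X} \<in> F" unfolding op_mem by blast
    moreover have "(\<lambda>m. g (0,m)) = char_fun {m. (0,m) \<in> X}" using X(2) by (simp add: char_fun_def)
    ultimately have "(\<lambda>m. g (0,m)) \<in> (\<Union>n. N n)" using N(2) by blast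
    then show "g \<in> (\<Union>n. N' n)" unfolding N'_def by blast
  qed
  ultimately show ?thesis unfolding non_meager_def meager_in_def by blast
qed

definition chs :: "(nat \<Rightarrow> ('a \<Rightarrow> bool) set) \<Rightarrow> nat \<Rightarrow> 'a set \<Rightarrow> 'a set \<times> ('a \<Rightarrow> bool)" where
  "chs M k D = (SOME p. finite (fst p) \<and> fst p \<inter> D = {} \<and> (\<forall>f. agr (fst p) (snd p) f \<longrightarrow> f \<notin> M k))"

primrec Ds :: "(nat \<Rightarrow> ('a \<Rightarrow> bool) set) \<Rightarrow> nat \<Rightarrow> 'a set" where
  "Ds M 0 = {}"
| "Ds M (Suc k) = Ds M k \<union> fst (chs M k (Ds M k))"

lemma chs_prop:
  assumes "nowhere_dense_in cantor_top (M k)" "finite D"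
  shows "finite (fst (chs M k D)) \<and> fst (chs M k D) \<inter> D = {} \<and>
         (\<forall>f. agr (fst (chs M k D)) (snd (chs M k D)) f \<longrightarrow> f \<notin> M k)"
proof -
  obtain I u where IU: "finite I" "I \<inter> D = {}" "\<forall>f. agr I u f \<longrightarrow> f \<notin> M k"
    using ext_lemma[OF assms] by (elim exE conjE)
  have "\<exists>p. finite (fst p) \<and> fst p \<inter> D = {} \<and> (\<forall>f. agr (fst p) (snd p) f \<longrightarrow> f \<notin> M k)"
    using IU by (intro exI[of _ "(I,u)"]) simp
  then show ?thesis unfolding chs_def by (rule someI_ex)
qed

lemma Ds_finite:
  assumes "\<And>k. nowhere_dense_in cantor_top (M k)"
  shows "finite (Ds M k)"
proof (induction k)
  case 0 then show ?case by simp
next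
  case (Suc k)
  then show ?case using chs_prop[OF assms Suc.IH] by simp
qed

lemma Ds_mono:
  "j < k \<Longrightarrow> fst (chs M j (Ds M j)) \<subseteq> Ds M k"
proof (induction k)
  case 0 then show ?case by simp
next
  case (Suc k)
  show ?case
  proof (cases "j = k")
    case True then show ?thesis by auto
  next
    case False
    then have "j < k" using Suc.prems by simp
    then show ?thesis using Suc.IH by auto
  qed
qed

lemma meager_down:
  assumes ff: "free_filter F" and nm: "\<not> non_meager (omega_power F)"
  shows "\<not> non_meager F"
proof -
  have isF: "is_filter F" using ff unfolding free_filter_def by simp
  have cof: "\<And>A. finite (UNIV - A) \<Longrightarrow> A \<in> F" using ff unfolding free_filter_def by blast
  have F4: "\<And>A B. A \<in> F \<Longrightarrow> B \<in> F \<Longrightarrow> A \<inter> B \<in> F" using isF unfolding Defs.is_filter_def by blast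
  have F3: "\<And>A B. A \<in> omega_power F \<Longrightarrow> A \<subseteq> B \<Longrightarrow> B \<in> omega_power F"
    using is_filter_op[OF isF] unfolding Defs.is_filter_def by blast
  obtain N :: "nat \<Rightarrow> (nat \<times> nat \<Rightarrow> bool) set" where N: "\<And>n. nowhere_dense_in cantor_top (N n)"
    "char_fun ` omega_power F \<subseteq> (\<Union>n. N n)"
    using nm unfolding non_meager_def meager_in_def by blast
  define M where "M k = (\<Union>i\<le>k. N i)" for k
  have ndM: "\<And>k. nowhere_dense_in cantor_top (M k)" unfolding M_def by (rule nd_UN_atMost[OF N(1)])
  define I where "I k = fst (chs M k (Ds M k))" for k
  define u where "u k = snd (chs M k (Ds M k))" for k
  have CP: "finite (I k) \<and> I k \<inter> Ds M k = {} \<and> (\<forall>f. agr (I k) (u k) f \<longrightarrow> f \<notin> M k)" for k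
    unfolding I_def u_def by (rule chs_prop[OF ndM Ds_finite[OF ndM]])
  have finI: "finite (I k)" for k using CP by blast
  have patI: "f \<notin> N j" if "agr (I k) (u k) f" "j \<le> k" for f j k
  proof -
    have "f \<notin> M k" using CP that(1) by blast
    then show ?thesis using that(2) unfolding M_def by blast
  qed
  have disj0: "I j \<inter> I k = {}" if "j < k" for j k
  proof -
    have "I j \<subseteq> Ds M k" unfolding I_def using Ds_mono[OF that] .
    moreover have "I k \<inter> Ds M k = {}" using CP by blast
    ultimately show ?thesis by blast
  qed
  have disj: "j = k" if "x \<in> I j" "x \<in> I k" for x j k
  proof (rule ccontr)
    assume "j \<noteq> k"
    then have "j < k \<or> k < j" by arith
    then show False using disj0 that by blast
  qed
  define R where "R = {(n::nat, m::nat). n \<le> m}"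
  define K where "K k = snd ` (I k \<inter> R)" for k
  define C where "C N0 = {f :: nat \<Rightarrow> bool. \<forall>k\<ge>N0. \<exists>x\<in>K k. f x}" for N0
  have cover: "char_fun ` F \<subseteq> (\<Union>N0. C N0)"
  proof
    fix g assume "g \<in> char_fun ` F"
    then obtain A where A: "A \<in> F" "g = char_fun A" by blast
    show "g \<in> (\<Union>N0. C N0)"
    proof (rule ccontr)
      assume ng: "g \<notin> (\<Union>N0. C N0)"
      have inf: "\<exists>k\<ge>N0. \<forall>x\<in>K k. x \<notin> A" for N0
      proof -
        have "g \<notin> C N0" using ng by blast
        then show ?thesis unfolding C_def A(2) char_fun_def by simp
      qed
      define Ks where "Ks = {k. \<forall>x\<in>K k. x \<notin> A}"
      define X where "X = Sigma UNIV (\<lambda>n. A \<inter> {n..})"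
      define X' where "X' = X \<union> {x. \<exists>k\<in>Ks. x \<in> I k \<and> u k x}"
      have "X \<in> omega_power F" unfolding op_mem
      proof
        fix n
        have "UNIV - {n..} = {..<n::nat}" by (auto simp: not_le)
        then have "finite (UNIV - {n..})" by simp
        then have "{n..} \<in> F" by (rule cof)
        then have "A \<inter> {n..} \<in> F" using A(1) F4 by blast
        moreover have "{m. (n, m) \<in> X} = A \<inter> {n..}" unfolding X_def by auto
        ultimately show "{m. (n, m) \<in> X} \<in> F" by simp
      qed
      then have "X' \<in> omega_power F" using F3 unfolding X'_def by blast
      then have "char_fun X' \<in> (\<Union>n. N n)" using N(2) by blast
      then obtain j where j: "char_fun X' \<in> N j" by blast
      obtain k where k: "k \<ge> j" "k \<in> Ks" using inf[of j] unfolding Ks_def by blast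
      have "agr (I k) (u k) (char_fun X')"
        unfolding agr_def
      proof
        fix x assume x: "x \<in> I k"
        obtain n m where nm: "x = (n, m)" by force
        have "x \<notin> X"
        proof
          assume "x \<in> X"
          then have "m \<in> A" "n \<le> m" unfolding X_def nm by auto
          then have "m \<in> K k" unfolding K_def R_def using x nm by force
          then show False using k(2) \<open>m \<in> A\<close> unfolding Ks_def by blast
        qed
        have "x \<in> X' \<longleftrightarrow> u k x"
        proof
          assume "x \<in> X'"
          then obtain k' where "k' \<in> Ks" "x \<in> I k'" "u k' x" unfolding X'_def using \<open>x \<notin> X\<close> by blast
          moreover have "k' = k" using disj[OF \<open>x \<in> I k'\<close> x] .
          ultimately show "u k x" by simp
        next
          assume "u k x"
          then show "x \<in> X'" unfolding X'_def using k(2) x by blast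
        qed
        then show "char_fun X' x = u k x" unfolding char_fun_def by simp
      qed
      then have "char_fun X' \<notin> N j" using patI k(1) by blast
      then show False using j by blast
    qed
  qed
  have ndC: "nowhere_dense_in cantor_top (C N0)" for N0
    unfolding nd_iff
  proof (intro allI impI)
    fix E :: "nat set" and w :: "nat \<Rightarrow> bool" assume fE: "finite E"
    obtain M0 where M0: "E \<subseteq> {..<M0}" using fE finite_nat_iff_bounded by blast
    define Q where "Q = {(n::nat, m::nat). n \<le> m \<and> m < M0}"
    have "Q \<subseteq> {..<M0} \<times> {..<M0}" unfolding Q_def by auto
    then have finQ: "finite Q" using finite_subset by blast
    have fq: "finite {k. q \<in> I k}" for q
    proof (cases "\<exists>k0. q \<in> I k0")
      case True
      then obtain k0 where "q \<in> I k0" by blast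
      then have "{k. q \<in> I k} \<subseteq> {k0}" using disj by blast
      then show ?thesis using finite_subset by blast
    qed simp
    have "{k. I k \<inter> Q \<noteq> {}} \<subseteq> (\<Union>q\<in>Q. {k. q \<in> I k})" by blast
    moreover have "finite (\<Union>q\<in>Q. {k. q \<in> I k})" using finQ fq by blast
    ultimately have "finite {k. I k \<inter> Q \<noteq> {}}" using finite_subset by blast
    then obtain B where B: "{k. I k \<inter> Q \<noteq> {}} \<subseteq> {..<B}" using finite_nat_iff_bounded by blast
    define k where "k = N0 + B"
    have IQ: "I k \<inter> Q = {}"
    proof (rule ccontr)
      assume "I k \<inter> Q \<noteq> {}"
      then have "k < B" using B by blast
      then show False unfolding k_def by simp
    qed
    have KM: "M0 \<le> y" if yK: "y \<in> K k" for y
    proof -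
      obtain x where x: "x \<in> I k" "x \<in> R" "y = snd x" using yK unfolding K_def by blast
      obtain n m where nm: "x = (n, m)" by force
      have "n \<le> m" using x(2) nm unfolding R_def by simp
      show ?thesis
      proof (rule ccontr)
        assume "\<not> M0 \<le> y"
        then have "x \<in> Q" unfolding Q_def using nm x(3) \<open>n \<le> m\<close> by simp
        then show False using IQ x(1) by blast
      qed
    qed
    have finK: "finite (K k)" unfolding K_def using finI by blast
    define w' where "w' = (\<lambda>x. if x \<in> E then w x else False)"
    show "\<exists>E' w'. finite E' \<and> E \<subseteq> E' \<and> agr E w w' \<and> (\<forall>f. agr E' w' f \<longrightarrow> f \<notin> C N0)"
    proof (intro exI conjI allI impI)
      show "finite (E \<union> K k)" using fE finK by simp
      show "E \<subseteq> E \<union> K k" by simp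
      show "agr E w w'" unfolding agr_def w'_def by simp
      fix f assume af: "agr (E \<union> K k) w' f"
      have "\<not> f y" if "y \<in> K k" for y
      proof -
        have "y \<notin> E" using KM[OF that] M0 by auto
        then show ?thesis using af that unfolding agr_def w'_def by simp
      qed
      moreover have "k \<ge> N0" unfolding k_def by simp
      ultimately show "f \<notin> C N0" unfolding C_def by blast
    qed
  qed
  show ?thesis unfolding non_meager_def meager_in_def using ndC cover by blast
qed

theorem mainTheorem5:
  fixes F :: "nat set set"
  assumes "free_filter F"
  shows "(non_meager F \<longleftrightarrow> non_meager (omega_power F)) \<and>
         (P_filter F \<longleftrightarrow> P_filter (omega_power F))"
proof -
  have isF: "is_filter F" using assms unfolding free_filter_def by simp
  show ?thesis
    using meager_up[of F] meager_down[OF assms] P_up[OF isF] P_down[OF isF] by blast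
qed

end
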